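(* Let $K$ be a field of characteristic $0$, let $E$ be the infinite-dimensional unitary Grassmann algebra over $K$ with even part $E_0$, let $A=\begin{pmatrix} E_0 & E\\ 0 & E\end{pmatrix}$, and let $F_n(A)=K\langle x_1,\dots,x_n\rangle/(K\langle x_1,\dots,x_n\rangle\cap T(A))$. Let $n\geq 2$ be even and $m\geq n+2$. Then the polynomial \[f_{m,n}^{(2)}=[x_2,x_1,\dots,x_1][x_1,x_2][x_3,x_4]\cdots[x_{n-1},x_n],\] where the first factor is the left-normed commutator of length $m-n$ consisting of $x_2$ followed by $m-n-1$ copies of $x_1$, is not a polynomial identity of $F_n(A)$.
   Context: All algebras are associative and unitary over $K$; $T(A)$ is the ideal of polynomial identities of $A$. $E$ is generated by anticommuting $e_1,e_2,\dots$ and $E_0$ is the span of basis products of even length. Commutators: $[a,b]=ab-ba$, $[a_1,\dots,a_k]=[[a_1,\dots,a_{k-1}],a_k]$. The polynomial has total degree $m$. *)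

theory Defs
  imports Main
begin

text \<open>An element of E is a finite K-linear combination of basis monomials e_S,
  S a finite set of generator indices (e_S = e_{i1} ... e_{ik}, i1 < ... < ik).
  We represent it by its coefficient function.\<close>

type_synonym 'k gr = "nat set \<Rightarrow> 'k"

definition grass :: "'k::field gr set" where
  "grass = {a. finite {S. a S \<noteq> 0} \<and> (\<forall>S. a S \<noteq> 0 \<longrightarrow> finite S)}"

definition grass0 :: "'k::field gr set" where
  "grass0 = {a \<in> grass. \<forall>S. a S \<noteq> 0 \<longrightarrow> even (card S)}"

text \<open>sign of e_S e_T = sign * e_{S \<union> T} for disjoint finite S, T\<close>
definition gsgn :: "nat set \<Rightarrow> nat set \<Rightarrow> 'k::field" where
  "gsgn S T = (-1) ^ card {(i, j). i \<in> S \<and> j \<in> T \<and> j < i}"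

definition gzero :: "'k::field gr" where "gzero = (\<lambda>S. 0)"
definition gone :: "'k::field gr" where "gone = (\<lambda>S. if S = {} then 1 else 0)"
definition gadd :: "'k::field gr \<Rightarrow> 'k gr \<Rightarrow> 'k gr" where
  "gadd a b = (\<lambda>S. a S + b S)"
definition gmul :: "'k::field gr \<Rightarrow> 'k gr \<Rightarrow> 'k gr" where
  "gmul a b = (\<lambda>U. if finite U then (\<Sum>S\<in>Pow U. gsgn S (U - S) * a S * b (U - S)) else 0)"

text \<open>(a, b, c) represents the upper triangular matrix with entries a (1,1), b (1,2), c (2,2).\<close>
type_synonym 'k ut = "'k gr \<times> 'k gr \<times> 'k gr"

definition Acarrier :: "'k::field ut set" where
  "Acarrier = {(a, b, c). a \<in> grass0 \<and> b \<in> grass \<and> c \<in> grass}"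

fun utmul :: "'k::field ut \<Rightarrow> 'k ut \<Rightarrow> 'k ut" where
  "utmul (a, b, c) (a', b', c') = (gmul a a', gadd (gmul a b') (gmul b c'), gmul c c')"

definition utone :: "'k::field ut" where "utone = (gone, gzero, gone)"
definition utzero :: "'k::field ut" where "utzero = (gzero, gzero, gzero)"

definition utprod :: "'k::field ut list \<Rightarrow> 'k ut" where
  "utprod xs = foldr utmul xs utone"

section \<open>Free associative algebra K<X>, X = {x_1, x_2, ...} (x_i is letter i)\<close>

type_synonym 'k npoly = "nat list \<Rightarrow> 'k"

definition freealg :: "'k::field npoly set" where
  "freealg = {p. finite {w. p w \<noteq> 0}}"

definition freealg_n :: "nat \<Rightarrow> 'k::field npoly set" where
  "freealg_n n = {p \<in> freealg. \<forall>w. p w \<noteq> 0 \<longrightarrow> set w \<subseteq> {1..n}}"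

definition pvar :: "nat \<Rightarrow> 'k::field npoly" where
  "pvar i = (\<lambda>w. if w = [i] then 1 else 0)"
definition pone :: "'k::field npoly" where
  "pone = (\<lambda>w. if w = [] then 1 else 0)"
definition pmul :: "'k::field npoly \<Rightarrow> 'k npoly \<Rightarrow> 'k npoly" where
  "pmul p q = (\<lambda>w. \<Sum>i\<le>length w. p (take i w) * q (drop i w))"
definition pcomm :: "'k::field npoly \<Rightarrow> 'k npoly \<Rightarrow> 'k npoly" where
  "pcomm p q = (\<lambda>w. pmul p q w - pmul q p w)"

definition lcomm :: "'k::field npoly \<Rightarrow> 'k npoly list \<Rightarrow> 'k npoly" where
  "lcomm a as = foldl pcomm a as"

definition pprod :: "'k::field npoly list \<Rightarrow> 'k npoly" where
  "pprod ps = foldr pmul ps pone"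

definition psubst :: "(nat \<Rightarrow> 'k::field npoly) \<Rightarrow> 'k npoly \<Rightarrow> 'k npoly" where
  "psubst \<sigma> f = (\<lambda>w. \<Sum>u\<in>{u. f u \<noteq> 0}. f u * pprod (map \<sigma> u) w)"

definition evalA :: "(nat \<Rightarrow> 'k::field ut) \<Rightarrow> 'k npoly \<Rightarrow> 'k ut" where
  "evalA \<phi> p =
    ((\<lambda>S. \<Sum>w\<in>{w. p w \<noteq> 0}. p w * fst (utprod (map \<phi> w)) S),
     (\<lambda>S. \<Sum>w\<in>{w. p w \<noteq> 0}. p w * fst (snd (utprod (map \<phi> w))) S),
     (\<lambda>S. \<Sum>w\<in>{w. p w \<noteq> 0}. p w * snd (snd (utprod (map \<phi> w))) S))"

definition TA :: "'k::field npoly set" where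
  "TA = {p \<in> freealg. \<forall>\<phi>. (\<forall>i. \<phi> i \<in> Acarrier) \<longrightarrow> evalA \<phi> p = utzero}"

text \<open>f is a polynomial identity of F_n(A) = K<x_1..x_n> / (K<x_1..x_n> \<inter> T(A)):
  for all elements g_i + (K<x_1..x_n> \<inter> T(A)) of F_n(A), f(g_1, g_2, ...) lies in T(A),
  i.e. is zero in F_n(A).\<close>
definition PI_of_Fn :: "nat \<Rightarrow> 'k::field npoly \<Rightarrow> bool" where
  "PI_of_Fn n f \<longleftrightarrow> (\<forall>\<sigma>. (\<forall>i. \<sigma> i \<in> freealg_n n) \<longrightarrow> psubst \<sigma> f \<in> TA)"

definition f2 :: "nat \<Rightarrow> nat \<Rightarrow> 'k::field npoly" where
  "f2 m n = pmul (lcomm (pvar 2) (replicate (m - n - 1) (pvar 1)))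
     (pmul (pcomm (pvar 1) (pvar 2))
        (pprod (map (\<lambda>j. pcomm (pvar (2 * j + 3)) (pvar (2 * j + 4))) [0..<(n - 2) div 2])))"

end

theory Submission
  imports Defs
begin

definition smono :: "'k::field \<Rightarrow> nat set \<Rightarrow> 'k gr" where
  "smono c T = (\<lambda>S. if S = T then c else 0)"
definition fin0 :: "'k::field gr \<Rightarrow> bool" where
  "fin0 a \<longleftrightarrow> (\<forall>U. infinite U \<longrightarrow> a U = 0)"
definition invs :: "nat set \<Rightarrow> nat set \<Rightarrow> (nat \<times> nat) set" where
  "invs A B = {(i,j). i \<in> A \<and> j \<in> B \<and> j < i}"

lemma gsgn_invs: "gsgn A B = (-1) ^ card (invs A B)"
  by (simp add: gsgn_def invs_def)

lemma invs_Un1: "invs (A \<union> B) C = invs A C \<union> invs B C" by (auto simp: invs_def)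
lemma invs_Un2: "invs A (B \<union> C) = invs A B \<union> invs A C" by (auto simp: invs_def)
lemma invs_fin: "finite A \<Longrightarrow> finite B \<Longrightarrow> finite (invs A B)"
  by (rule finite_subset[of _ "A \<times> B"]) (auto simp: invs_def)

lemma card_invs_Un1:
  assumes "finite A" "finite B" "finite C" "A \<inter> B = {}"
  shows "card (invs (A \<union> B) C) = card (invs A C) + card (invs B C)"
  unfolding invs_Un1 using assms
  by (intro card_Un_disjoint invs_fin) (auto simp: invs_def)

lemma card_invs_Un2:
  assumes "finite A" "finite B" "finite C" "B \<inter> C = {}"
  shows "card (invs A (B \<union> C)) = card (invs A B) + card (invs A C)"
  unfolding invs_Un2 using assms
  by (intro card_Un_disjoint invs_fin) (auto simp: invs_def)

lemma gsgn_assoc: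
  assumes "finite U" "S \<subseteq> T" "T \<subseteq> U"
  shows "gsgn T (U - T) * gsgn S (T - S) = (gsgn S (U - S) * gsgn (T - S) (U - T) :: 'k::field)"
proof -
  have fT1: "finite T" using finite_subset[OF assms(3) assms(1)] .
  have fT: "finite T" "finite S" using fT1 finite_subset[OF assms(2) fT1] by auto
  have e1: "S \<union> (T - S) = T" and e2: "(T - S) \<union> (U - T) = U - S" using assms by auto
  have c1': "card (invs (S \<union> (T - S)) (U - T)) = card (invs S (U - T)) + card (invs (T - S) (U - T))"
    by (rule card_invs_Un1) (use assms fT in auto)
  have c2': "card (invs S ((T - S) \<union> (U - T))) = card (invs S (T - S)) + card (invs S (U - T))"
    by (rule card_invs_Un2) (use assms fT in auto)
  have c1: "card (invs T (U - T)) = card (invs S (U - T)) + card (invs (T - S) (U - T))"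
    using c1' unfolding e1 .
  have c2: "card (invs S (U - S)) = card (invs S (T - S)) + card (invs S (U - T))"
    using c2' unfolding e2 .
  show ?thesis unfolding gsgn_invs c1 c2 by (simp only: power_add mult_ac)
qed

lemma L0a: assumes True: "finite U"
 shows "gmul (gmul a b) c U = (\<Sum>T\<in>Pow U. gsgn T (U - T) * (\<Sum>S\<in>Pow T. gsgn S (T - S) * a S * b (T - S)) * c (U - T))"
  using True by (auto simp: gmul_def intro!: sum.cong dest: finite_subset)
lemma L0b: "(\<Sum>T\<in>Pow U. gsgn T (U - T) * (\<Sum>S\<in>Pow T. gsgn S (T - S) * a S * b (T - S)) * c (U - T)) =
   (\<Sum>T\<in>Pow U. \<Sum>S\<in>Pow T.
       gsgn T (U - T) * gsgn S (T - S) * a S * b (T - S) * (c (U - T)::'k::field))"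
  by (simp add: sum_distrib_left sum_distrib_right mult.assoc)
lemma R0a: assumes True: "finite U"
 shows "gmul a (gmul b c) U = (\<Sum>S\<in>Pow U. gsgn S (U - S) * a S * (\<Sum>R\<in>Pow (U - S). gsgn R (U - S - R) * b R * c (U - S - R)))"
  using True by (auto simp: gmul_def intro!: sum.cong)
lemma R0b: "(\<Sum>S\<in>Pow U. gsgn S (U - S) * a S * (\<Sum>R\<in>Pow (U - S). gsgn R (U - S - R) * b R * c (U - S - R))) =
  (\<Sum>S\<in>Pow U. \<Sum>R\<in>Pow (U - S).
       gsgn S (U - S) * a S * (gsgn R (U - S - R) * b R * (c (U - S - R) :: 'k::field)))"
  by (simp add: sum_distrib_left)

lemma reidx:
  fixes U :: "nat set"
  assumes "\<And>T S. S \<subseteq> T \<Longrightarrow> T \<subseteq> U \<Longrightarrow> F T S = G S (T - S)"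
  shows "(\<Sum>(T,S)\<in>Sigma (Pow U) Pow. F T S) = (\<Sum>(S,R)\<in>Sigma (Pow U) (\<lambda>S. Pow (U - S)). (G S R :: 'a::comm_monoid_add))"
proof (rule sum.reindex_bij_witness[where i = "\<lambda>(S,R). (S \<union> R, S)" and j = "\<lambda>(T,S). (S, T - S)"])
  fix x :: "nat set \<times> nat set" assume "x \<in> Sigma (Pow U) Pow" thus "(\<lambda>(S,R). (S \<union> R, S)) ((\<lambda>(T,S). (S, T - S)) x) = x" by (cases x) auto
next
  fix x :: "nat set \<times> nat set" assume "x \<in> Sigma (Pow U) Pow" thus "(\<lambda>(T,S). (S, T - S)) x \<in> Sigma (Pow U) (\<lambda>S. Pow (U - S))" by (cases x) auto
next
  fix y :: "nat set \<times> nat set" assume "y \<in> Sigma (Pow U) (\<lambda>S. Pow (U - S))" thus "(\<lambda>(T,S). (S, T - S)) ((\<lambda>(S,R). (S \<union> R, S)) y) = y" by (cases y) auto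
next
  fix y :: "nat set \<times> nat set" assume "y \<in> Sigma (Pow U) (\<lambda>S. Pow (U - S))" thus "(\<lambda>(S,R). (S \<union> R, S)) y \<in> Sigma (Pow U) Pow" by (cases y) auto
next
  fix x :: "nat set \<times> nat set" assume "x \<in> Sigma (Pow U) Pow" thus "(case (\<lambda>(T,S). (S, T - S)) x of (S, R) \<Rightarrow> G S R) = (case x of (T, S) \<Rightarrow> F T S)"
    using assms by (cases x) auto
qed

lemma arith4: "(gT::'k::field) * gS = gS' * gR \<Longrightarrow> gT * gS * a * b * c = gS' * a * (gR * b * c)"
proof -
  assume eq: "gT * gS = gS' * gR"
  have "gT * gS * a * b * c = (gT * gS) * (a * b * c)" by (simp only: mult.assoc)
  also have "\<dots> = (gS' * gR) * (a * b * c)" by (simp only: eq)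
  also have "\<dots> = gS' * a * (gR * b * c)" by (simp only: mult_ac)
  finally show ?thesis .
qed

lemma gmul_assoc: "gmul (gmul a b) c = gmul a (gmul b c)"
proof (rule ext)
  fix U :: "nat set"
  show "gmul (gmul a b) c U = gmul a (gmul b c) U"
  proof (cases "finite U")
    case False thus ?thesis by (simp add: gmul_def)
  next
    case True
    have fin: "\<And>T. T \<in> Pow U \<Longrightarrow> finite T" using True finite_subset by auto
    have L0: "gmul (gmul a b) c U = (\<Sum>T\<in>Pow U. \<Sum>S\<in>Pow T.
       gsgn T (U - T) * gsgn S (T - S) * a S * b (T - S) * c (U - T))"
      using L0a[OF True] L0b by (rule trans)
    have L: "gmul (gmul a b) c U = (\<Sum>(T,S)\<in>Sigma (Pow U) Pow.
       gsgn T (U - T) * gsgn S (T - S) * a S * b (T - S) * c (U - T))"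
      unfolding L0 by (rule sum.Sigma) (use True fin in auto)
    have R0: "gmul a (gmul b c) U = (\<Sum>S\<in>Pow U. \<Sum>R\<in>Pow (U - S).
       gsgn S (U - S) * a S * (gsgn R (U - S - R) * b R * c (U - S - R)))"
      using R0a[OF True] R0b by (rule trans)
    have R: "gmul a (gmul b c) U = (\<Sum>(S,R)\<in>Sigma (Pow U) (\<lambda>S. Pow (U - S)).
       gsgn S (U - S) * a S * (gsgn R (U - S - R) * b R * c (U - S - R)))"
      unfolding R0 by (rule sum.Sigma) (use True fin in auto)
    show ?thesis unfolding L R
    proof (rule reidx)
      fix T S assume ST: "S \<subseteq> T" "T \<subseteq> U"
      have d: "U - S - (T - S) = U - T" using ST by auto
      show "gsgn T (U - T) * gsgn S (T - S) * a S * b (T - S) * c (U - T) =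
         gsgn S (U - S) * a S * (gsgn (T - S) (U - S - (T - S)) * b (T - S) * c (U - S - (T - S)))"
        unfolding d by (rule arith4[OF gsgn_assoc[OF True ST]])
    qed
  qed
qed

lemma gmul_gzero_l[simp]: "gmul gzero b = gzero"
  by (rule ext) (simp add: gmul_def gzero_def)
lemma gmul_gzero_r[simp]: "gmul a gzero = gzero"
  by (rule ext) (simp add: gmul_def gzero_def)
lemma gmul_gadd_l: "gmul (gadd a b) c = gadd (gmul a c) (gmul b c)"
  by (rule ext) (simp add: gmul_def gadd_def algebra_simps sum.distrib)
lemma gmul_gadd_r: "gmul a (gadd b c) = gadd (gmul a b) (gmul a c)"
  by (rule ext) (simp add: gmul_def gadd_def algebra_simps sum.distrib)
lemma gadd_assoc: "gadd (gadd a b) c = gadd a (gadd b c)"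
  by (rule ext) (simp add: gadd_def algebra_simps)
lemma gadd_gzero_r[simp]: "gadd a gzero = a" by (rule ext) (simp add: gadd_def gzero_def)
lemma gadd_gzero_l[simp]: "gadd gzero a = a" by (rule ext) (simp add: gadd_def gzero_def)

lemma fin0_gmul: "fin0 (gmul a b)" by (simp add: fin0_def gmul_def)
lemma fin0_gadd: "fin0 a \<Longrightarrow> fin0 b \<Longrightarrow> fin0 (gadd a b)" by (simp add: fin0_def gadd_def)
lemma fin0_gone: "fin0 gone" by (simp add: fin0_def gone_def)
lemma fin0_gzero: "fin0 gzero" by (simp add: fin0_def gzero_def)

lemma gsgn_empty1[simp]: "gsgn {} A = 1" by (simp add: gsgn_def)
lemma gsgn_empty2[simp]: "gsgn A {} = 1" by (simp add: gsgn_def)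

lemma gone_l: assumes "fin0 a" shows "gmul gone a = a"
proof (rule ext)
  fix U :: "nat set"
  show "gmul gone a U = a U"
  proof (cases "finite U")
    case False thus ?thesis using assms by (simp add: gmul_def fin0_def)
  next
    case True
    have "(\<Sum>S\<in>Pow U. gsgn S (U - S) * gone S * a (U - S)) = (\<Sum>S\<in>Pow U. if S = {} then a U else 0)"
      by (rule sum.cong) (auto simp: gone_def)
    also have "\<dots> = a U" by (simp add: True)
    finally show ?thesis using True by (simp add: gmul_def)
  qed
qed

lemma gone_r: assumes "fin0 a" shows "gmul a gone = a"
proof (rule ext)
  fix U :: "nat set"
  show "gmul a gone U = a U"
  proof (cases "finite U")
    case False thus ?thesis using assms by (simp add: gmul_def fin0_def)
  next
    case True
    have "(\<Sum>S\<in>Pow U. gsgn S (U - S) * a S * gone (U - S)) = (\<Sum>S\<in>Pow U. if S = U then a U else 0)"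
      by (rule sum.cong) (auto simp: gone_def)
    also have "\<dots> = a U" by (simp add: True)
    finally show ?thesis using True by (simp add: gmul_def)
  qed
qed

lemma utmul_proj: "utmul x y = (gmul (fst x) (fst y),
   gadd (gmul (fst x) (fst (snd y))) (gmul (fst (snd x)) (snd (snd y))), gmul (snd (snd x)) (snd (snd y)))"
  by (cases x; cases y) auto

lemma utmul_assoc: "utmul (utmul x y) z = utmul x (utmul y z)"
  by (simp add: utmul_proj gmul_assoc gmul_gadd_l gmul_gadd_r gadd_assoc)

definition fin3 :: "'k::field ut \<Rightarrow> bool" where
  "fin3 x \<longleftrightarrow> fin0 (fst x) \<and> fin0 (fst (snd x)) \<and> fin0 (snd (snd x))"

lemma utone_l: "fin3 y \<Longrightarrow> utmul utone y = y"
  by (cases y) (simp add: utmul_proj utone_def fin3_def gone_l)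
lemma utone_r: "fin3 y \<Longrightarrow> utmul y utone = y"
  by (cases y) (simp add: utmul_proj utone_def fin3_def gone_r)

lemma utprod_Nil[simp]: "utprod [] = utone" by (simp add: utprod_def)
lemma utprod_Cons[simp]: "utprod (x # xs) = utmul x (utprod xs)" by (simp add: utprod_def)

lemma fin3_utprod: "fin3 (utprod xs)"
  by (cases xs) (auto simp: fin3_def utone_def fin0_gone fin0_gzero utmul_proj fin0_gmul fin0_gadd)

lemma utprod_append: "utprod (u @ v) = utmul (utprod u) (utprod v)"
  by (induction u) (simp_all add: utone_l fin3_utprod utmul_assoc)

definition supp :: "'k::field npoly \<Rightarrow> nat list set" where "supp p = {w. p w \<noteq> 0}"

lemma freealg_fin: "p \<in> freealg \<Longrightarrow> finite (supp p)" by (simp add: freealg_def supp_def)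

lemma pmul_nz:
  assumes "pmul p q w \<noteq> 0"
  shows "\<exists>i\<le>length w. p (take i w) \<noteq> 0 \<and> q (drop i w) \<noteq> 0"
proof (rule ccontr)
  assume "\<not> ?thesis"
  hence "\<forall>i\<in>{..length w}. p (take i w) * q (drop i w) = 0" by auto
  hence "pmul p q w = 0" unfolding pmul_def by (rule sum.neutral)
  thus False using assms by simp
qed

lemma supp_pmul: "supp (pmul p q) \<subseteq> (\<lambda>(u,v). u @ v) ` (supp p \<times> supp q)"
proof
  fix w assume "w \<in> supp (pmul p q)"
  then obtain i where "p (take i w) \<noteq> 0" "q (drop i w) \<noteq> 0" using pmul_nz unfolding supp_def by blast
  hence "(take i w, drop i w) \<in> supp p \<times> supp q" by (simp add: supp_def)
  thus "w \<in> (\<lambda>(u,v). u @ v) ` (supp p \<times> supp q)" by (rule rev_image_eqI) simp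
qed

lemma pmul_freealg: assumes "p \<in> freealg" "q \<in> freealg" shows "pmul p q \<in> freealg"
proof -
  have "finite ((\<lambda>(u,v). u @ v) ` (supp p \<times> supp q))" using assms freealg_fin by auto
  from finite_subset[OF supp_pmul this] show ?thesis by (simp add: freealg_def supp_def)
qed

lemma pmul_letters:
  assumes "\<forall>w. p w \<noteq> 0 \<longrightarrow> set w \<subseteq> A" "\<forall>w. q w \<noteq> 0 \<longrightarrow> set w \<subseteq> A"
  shows "\<forall>w. pmul p q w \<noteq> 0 \<longrightarrow> set w \<subseteq> A"
proof (intro allI impI)
  fix w assume "pmul p q w \<noteq> 0"
  then obtain i where "p (take i w) \<noteq> 0" "q (drop i w) \<noteq> 0" using pmul_nz by blast
  hence "set (take i w) \<subseteq> A" "set (drop i w) \<subseteq> A" using assms by auto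
  moreover have "set w = set (take i w) \<union> set (drop i w)" by (metis append_take_drop_id set_append)
  ultimately show "set w \<subseteq> A" by simp
qed

lemma pmul_fn: "p \<in> freealg_n n \<Longrightarrow> q \<in> freealg_n n \<Longrightarrow> pmul p q \<in> freealg_n n"
  unfolding freealg_n_def using pmul_freealg pmul_letters by blast

lemma pcomm_fn: assumes "p \<in> freealg_n n" "q \<in> freealg_n n" shows "pcomm p q \<in> freealg_n n"
proof -
  have a: "pmul p q \<in> freealg_n n" "pmul q p \<in> freealg_n n" using assms pmul_fn by blast+
  have "{w. pcomm p q w \<noteq> 0} \<subseteq> {w. pmul p q w \<noteq> 0} \<union> {w. pmul q p w \<noteq> 0}"
    by (auto simp: pcomm_def)
  moreover have "finite ({w. pmul p q w \<noteq> 0} \<union> {w. pmul q p w \<noteq> 0})"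
    using a by (simp add: freealg_n_def freealg_def)
  ultimately have "finite {w. pcomm p q w \<noteq> 0}" by (rule finite_subset)
  moreover have "\<forall>w. pcomm p q w \<noteq> 0 \<longrightarrow> set w \<subseteq> {1..n}"
  proof (intro allI impI)
    fix w assume "pcomm p q w \<noteq> 0"
    hence "pmul p q w \<noteq> 0 \<or> pmul q p w \<noteq> 0" by (auto simp: pcomm_def)
    thus "set w \<subseteq> {1..n}" using a unfolding freealg_n_def by blast
  qed
  ultimately show ?thesis by (simp add: freealg_n_def freealg_def)
qed

lemma pvar_fn: "1 \<le> i \<Longrightarrow> i \<le> n \<Longrightarrow> pvar i \<in> freealg_n n"
proof -
  assume "1 \<le> i" "i \<le> n"
  have "{w. pvar i w \<noteq> (0::'a)} = {[i]}" by (auto simp: pvar_def)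
  thus "pvar i \<in> (freealg_n n :: 'a npoly set)" using \<open>1 \<le> i\<close> \<open>i \<le> n\<close>
    by (auto simp: freealg_n_def freealg_def pvar_def)
qed

lemma pone_fn: "pone \<in> freealg_n n"
proof -
  have "{w. pone w \<noteq> (0::'a)} = {[]}" by (auto simp: pone_def)
  thus "pone \<in> (freealg_n n :: 'a npoly set)" by (auto simp: freealg_n_def freealg_def pone_def)
qed

lemma fn_freealg: "p \<in> freealg_n n \<Longrightarrow> p \<in> freealg" by (simp add: freealg_n_def)

lemma evalA_over:
  assumes "finite W" "supp p \<subseteq> W"
  shows "evalA \<phi> p =
    ((\<lambda>S. \<Sum>w\<in>W. p w * fst (utprod (map \<phi> w)) S),
     (\<lambda>S. \<Sum>w\<in>W. p w * fst (snd (utprod (map \<phi> w))) S),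
     (\<lambda>S. \<Sum>w\<in>W. p w * snd (snd (utprod (map \<phi> w))) S))"
  unfolding evalA_def using assms
  by (auto simp: supp_def intro!: ext sum.mono_neutral_left)

lemma evalA_supp:
  "evalA \<phi> p =
    ((\<lambda>S. \<Sum>w\<in>supp p. p w * fst (utprod (map \<phi> w)) S),
     (\<lambda>S. \<Sum>w\<in>supp p. p w * fst (snd (utprod (map \<phi> w))) S),
     (\<lambda>S. \<Sum>w\<in>supp p. p w * snd (snd (utprod (map \<phi> w))) S))"
  unfolding evalA_def supp_def ..

lemma sum_pmul:
  assumes "p \<in> freealg" "q \<in> freealg"
  shows "(\<Sum>w\<in>(\<lambda>(u,v). u @ v) ` (supp p \<times> supp q). pmul p q w * X w) =
         (\<Sum>u\<in>supp p. \<Sum>v\<in>supp q. p u * q v * X (u @ v))"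
proof -
  let ?P = "supp p" and ?Q = "supp q"
  let ?W = "(\<lambda>(u,v). u @ v) ` (?P \<times> ?Q)"
  let ?F = "\<lambda>(w,i). p (take i w) * q (drop i w) * X w"
  let ?h = "\<lambda>(u::nat list, v::nat list). (u @ v, length u)"
  have fP: "finite ?P" and fQ: "finite ?Q" using assms freealg_fin by auto
  have fW: "finite ?W" using fP fQ by auto
  have s1: "(\<Sum>w\<in>?W. pmul p q w * X w) = (\<Sum>w\<in>?W. \<Sum>i\<in>{..length w}. p (take i w) * q (drop i w) * X w)"
    by (simp add: pmul_def sum_distrib_right)
  also have "\<dots> = (\<Sum>z\<in>Sigma ?W (\<lambda>w. {..length w}). ?F z)"
    by (rule sum.Sigma) (use fW in auto)
  also have "\<dots> = (\<Sum>z\<in>?h ` (?P \<times> ?Q). ?F z)"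
  proof (rule sum.mono_neutral_right)
    show "finite (Sigma ?W (\<lambda>w. {..length w}))" using fW by auto
    show "?h ` (?P \<times> ?Q) \<subseteq> Sigma ?W (\<lambda>w. {..length w})"
    proof
      fix z assume "z \<in> ?h ` (?P \<times> ?Q)"
      then obtain u v where uv: "(u,v) \<in> ?P \<times> ?Q" "z = (u @ v, length u)" by auto
      have "u @ v \<in> ?W" using uv(1) by (rule rev_image_eqI) simp
      thus "z \<in> Sigma ?W (\<lambda>w. {..length w})" using uv(2) by simp
    qed
    show "\<forall>z\<in>Sigma ?W (\<lambda>w. {..length w}) - ?h ` (?P \<times> ?Q). ?F z = 0"
    proof
      fix z assume z: "z \<in> Sigma ?W (\<lambda>w. {..length w}) - ?h ` (?P \<times> ?Q)"
      obtain w i where ze: "z = (w, i)" by (cases z)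
      have zS: "z \<in> Sigma ?W (\<lambda>w. {..length w})" using z by (rule DiffD1)
      have zn: "z \<notin> ?h ` (?P \<times> ?Q)" using z unfolding Diff_iff by (rule conjunct2)
      have il: "i \<le> length w" using zS unfolding ze by simp
      show "?F z = 0"
      proof (rule ccontr)
        assume "?F z \<noteq> 0"
        hence "p (take i w) \<noteq> 0" "q (drop i w) \<noteq> 0" unfolding ze by simp_all
        hence m: "(take i w, drop i w) \<in> ?P \<times> ?Q" by (simp add: supp_def)
        have e: "?h (take i w, drop i w) = z" using il ze by simp
        from e[symmetric] m have "z \<in> ?h ` (?P \<times> ?Q)" by (rule image_eqI)
        thus False using zn by contradiction
      qed
    qed
  qed
  also have "\<dots> = (\<Sum>z\<in>?P \<times> ?Q. ?F (?h z))"
  proof -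
    have inj: "inj_on ?h (?P \<times> ?Q)"
    proof (rule inj_onI)
      fix x y assume "x \<in> ?P \<times> ?Q" "y \<in> ?P \<times> ?Q" "?h x = ?h y"
      thus "x = y" by (cases x; cases y) (auto dest: append_eq_append_conv[THEN iffD1, rotated])
    qed
    show ?thesis using sum.reindex[OF inj, of ?F] by (simp only: comp_def)
  qed
  also have "\<dots> = (\<Sum>(u,v)\<in>?P \<times> ?Q. p u * q v * X (u @ v))"
    by (rule sum.cong[OF refl]) (simp add: split_beta)
  also have "\<dots> = (\<Sum>u\<in>?P. \<Sum>v\<in>?Q. p u * q v * X (u @ v))"
    by (rule sum.cartesian_product[symmetric])
  finally show ?thesis .
qed

lemma gmul_bilin:
  assumes "finite A" "finite B"
  shows "gmul (\<lambda>S. \<Sum>x\<in>A. c x * f x S) (\<lambda>S. \<Sum>y\<in>B. d y * g y S) U =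
         (\<Sum>x\<in>A. \<Sum>y\<in>B. c x * d y * gmul (f x) (g y) U)"
proof (cases "finite U")
  case False thus ?thesis by (simp add: gmul_def)
next
  case True
  have "gmul (\<lambda>S. \<Sum>x\<in>A. c x * f x S) (\<lambda>S. \<Sum>y\<in>B. d y * g y S) U =
     (\<Sum>T\<in>Pow U. \<Sum>x\<in>A. \<Sum>y\<in>B. c x * d y * (gsgn T (U - T) * f x T * g y (U - T)))"
    using True by (simp add: gmul_def sum_distrib_left sum_distrib_right mult_ac)
  also have "\<dots> = (\<Sum>x\<in>A. \<Sum>T\<in>Pow U. \<Sum>y\<in>B. c x * d y * (gsgn T (U - T) * f x T * g y (U - T)))"
    by (rule sum.swap)
  also have "\<dots> = (\<Sum>x\<in>A. \<Sum>y\<in>B. \<Sum>T\<in>Pow U. c x * d y * (gsgn T (U - T) * f x T * g y (U - T)))"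
    by (rule sum.cong[OF refl], rule sum.swap)
  also have "\<dots> = (\<Sum>x\<in>A. \<Sum>y\<in>B. c x * d y * gmul (f x) (g y) U)"
    using True by (simp add: gmul_def sum_distrib_left)
  finally show ?thesis .
qed

lemma evalA_pmul:
  assumes "p \<in> freealg" "q \<in> freealg"
  shows "evalA \<phi> (pmul p q) = utmul (evalA \<phi> p) (evalA \<phi> q)"
proof -
  let ?P = "supp p" and ?Q = "supp q"
  let ?W = "(\<lambda>(u,v). u @ v) ` (?P \<times> ?Q)"
  have fP: "finite ?P" and fQ: "finite ?Q" using assms freealg_fin by auto
  have fW: "finite ?W" using fP fQ by auto
  have E: "evalA \<phi> (pmul p q) =
    ((\<lambda>S. \<Sum>w\<in>?W. pmul p q w * fst (utprod (map \<phi> w)) S),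
     (\<lambda>S. \<Sum>w\<in>?W. pmul p q w * fst (snd (utprod (map \<phi> w))) S),
     (\<lambda>S. \<Sum>w\<in>?W. pmul p q w * snd (snd (utprod (map \<phi> w))) S))"
    by (rule evalA_over[OF fW supp_pmul])
  have app: "\<And>u v. utprod (map \<phi> (u @ v)) = utmul (utprod (map \<phi> u)) (utprod (map \<phi> v))"
    by (simp add: utprod_append)
  have A: "(\<lambda>S. \<Sum>w\<in>?W. pmul p q w * fst (utprod (map \<phi> w)) S) =
     gmul (\<lambda>S. \<Sum>u\<in>?P. p u * fst (utprod (map \<phi> u)) S) (\<lambda>S. \<Sum>v\<in>?Q. q v * fst (utprod (map \<phi> v)) S)"
  proof (rule ext)
    fix S
    show "(\<Sum>w\<in>?W. pmul p q w * fst (utprod (map \<phi> w)) S) =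
     gmul (\<lambda>S. \<Sum>u\<in>?P. p u * fst (utprod (map \<phi> u)) S) (\<lambda>S. \<Sum>v\<in>?Q. q v * fst (utprod (map \<phi> v)) S) S"
      unfolding sum_pmul[OF assms] gmul_bilin[OF fP fQ]
      by (simp add: utprod_append utmul_proj)
  qed
  have B: "(\<lambda>S. \<Sum>w\<in>?W. pmul p q w * fst (snd (utprod (map \<phi> w))) S) =
     gadd (gmul (\<lambda>S. \<Sum>u\<in>?P. p u * fst (utprod (map \<phi> u)) S) (\<lambda>S. \<Sum>v\<in>?Q. q v * fst (snd (utprod (map \<phi> v))) S))
          (gmul (\<lambda>S. \<Sum>u\<in>?P. p u * fst (snd (utprod (map \<phi> u))) S) (\<lambda>S. \<Sum>v\<in>?Q. q v * snd (snd (utprod (map \<phi> v))) S))"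
  proof (rule ext)
    fix S
    show "(\<Sum>w\<in>?W. pmul p q w * fst (snd (utprod (map \<phi> w))) S) =
     gadd (gmul (\<lambda>S. \<Sum>u\<in>?P. p u * fst (utprod (map \<phi> u)) S) (\<lambda>S. \<Sum>v\<in>?Q. q v * fst (snd (utprod (map \<phi> v))) S))
          (gmul (\<lambda>S. \<Sum>u\<in>?P. p u * fst (snd (utprod (map \<phi> u))) S) (\<lambda>S. \<Sum>v\<in>?Q. q v * snd (snd (utprod (map \<phi> v))) S)) S"
      unfolding sum_pmul[OF assms] gadd_def gmul_bilin[OF fP fQ]
      by (simp add: utprod_append utmul_proj gadd_def distrib_left sum.distrib)
  qed
  have C: "(\<lambda>S. \<Sum>w\<in>?W. pmul p q w * snd (snd (utprod (map \<phi> w))) S) =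
     gmul (\<lambda>S. \<Sum>u\<in>?P. p u * snd (snd (utprod (map \<phi> u))) S) (\<lambda>S. \<Sum>v\<in>?Q. q v * snd (snd (utprod (map \<phi> v))) S)"
  proof (rule ext)
    fix S
    show "(\<Sum>w\<in>?W. pmul p q w * snd (snd (utprod (map \<phi> w))) S) =
     gmul (\<lambda>S. \<Sum>u\<in>?P. p u * snd (snd (utprod (map \<phi> u))) S) (\<lambda>S. \<Sum>v\<in>?Q. q v * snd (snd (utprod (map \<phi> v))) S) S"
      unfolding sum_pmul[OF assms] gmul_bilin[OF fP fQ]
      by (simp add: utprod_append utmul_proj)
  qed
  show ?thesis unfolding E evalA_supp[of \<phi> p] evalA_supp[of \<phi> q] A B C by simp
qed

fun utsub :: "'k::field ut \<Rightarrow> 'k ut \<Rightarrow> 'k ut" where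
  "utsub (a, b, c) (a', b', c') = ((\<lambda>S. a S - a' S), (\<lambda>S. b S - b' S), (\<lambda>S. c S - c' S))"

lemma evalA_sub:
  assumes "f \<in> freealg" "g \<in> freealg"
  shows "evalA \<phi> (\<lambda>w. f w - g w) = utsub (evalA \<phi> f) (evalA \<phi> g)"
proof -
  let ?W = "supp f \<union> supp g"
  have fW: "finite ?W" using assms freealg_fin by auto
  have s: "supp (\<lambda>w. f w - g w) \<subseteq> ?W" by (auto simp: supp_def)
  have Ef: "evalA \<phi> f = ((\<lambda>S. \<Sum>w\<in>?W. f w * fst (utprod (map \<phi> w)) S),
     (\<lambda>S. \<Sum>w\<in>?W. f w * fst (snd (utprod (map \<phi> w))) S),
     (\<lambda>S. \<Sum>w\<in>?W. f w * snd (snd (utprod (map \<phi> w))) S))" by (rule evalA_over[OF fW]) auto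
  have Eg: "evalA \<phi> g = ((\<lambda>S. \<Sum>w\<in>?W. g w * fst (utprod (map \<phi> w)) S),
     (\<lambda>S. \<Sum>w\<in>?W. g w * fst (snd (utprod (map \<phi> w))) S),
     (\<lambda>S. \<Sum>w\<in>?W. g w * snd (snd (utprod (map \<phi> w))) S))" by (rule evalA_over[OF fW]) auto
  show ?thesis
    unfolding evalA_over[OF fW s] Ef Eg
    by (simp add: left_diff_distrib sum_subtractf)
qed

lemma evalA_pcomm:
  assumes "p \<in> freealg" "q \<in> freealg"
  shows "evalA \<phi> (pcomm p q) = utsub (utmul (evalA \<phi> p) (evalA \<phi> q)) (utmul (evalA \<phi> q) (evalA \<phi> p))"
  unfolding pcomm_def
  by (simp add: evalA_sub pmul_freealg assms evalA_pmul)

lemma evalA_pvar: assumes "fin3 (\<phi> i)" shows "evalA \<phi> (pvar i) = \<phi> i"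
proof -
  have s: "supp (pvar i :: 'a npoly) = {[i]}" by (auto simp: supp_def pvar_def)
  show ?thesis unfolding evalA_supp s using utone_r[OF assms] by (simp add: pvar_def)
qed

lemma evalA_pone: "evalA \<phi> pone = utone"
proof -
  have s: "supp (pone :: 'a npoly) = {[]}" by (auto simp: supp_def pone_def)
  show ?thesis unfolding evalA_supp s by (simp add: pone_def)
qed

lemma fin0_smono: "finite T \<Longrightarrow> fin0 (smono c T)" by (auto simp: fin0_def smono_def)

lemma gsgn_ordered: "(\<forall>i\<in>A. \<forall>j\<in>B. i < j) \<Longrightarrow> gsgn A B = 1"
proof -
  assume h: "\<forall>i\<in>A. \<forall>j\<in>B. i < j"
  have "invs A B = {}" unfolding invs_def using h less_asym by blast
  thus ?thesis by (simp add: gsgn_invs)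
qed

lemma gsgn_swap: "i < (j::nat) \<Longrightarrow> gsgn {j} {i} = -1"
proof -
  assume "i < j"
  hence "invs {j} {i} = {(j,i)}" by (auto simp: invs_def)
  thus ?thesis by (simp add: gsgn_invs)
qed

lemma smono_mul:
  assumes "finite T" "finite T'" "T \<inter> T' = {}"
  shows "gmul (smono c T) (smono d T') = smono (c * d * gsgn T T') (T \<union> T')"
proof (rule ext)
  fix U :: "nat set"
  show "gmul (smono c T) (smono d T') U = smono (c * d * gsgn T T') (T \<union> T') U"
  proof (cases "finite U")
    case False
    hence "U \<noteq> T \<union> T'" using assms by auto
    thus ?thesis using False by (simp add: gmul_def smono_def)
  next
    case True
    have "(\<Sum>S\<in>Pow U. gsgn S (U - S) * smono c T S * smono d T' (U - S)) =
          (\<Sum>S\<in>Pow U. if S = T then gsgn T (U - T) * c * smono d T' (U - T) else 0)"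
      by (rule sum.cong) (auto simp: smono_def)
    also have "\<dots> = (if T \<subseteq> U then gsgn T (U - T) * c * smono d T' (U - T) else 0)"
      using True by simp
    also have "\<dots> = smono (c * d * gsgn T T') (T \<union> T') U"
    proof (cases "U = T \<union> T'")
      case True
      hence "T \<subseteq> U" "U - T = T'" using assms by auto
      thus ?thesis using True by (simp add: smono_def)
    next
      case False
      hence "\<not> (T \<subseteq> U \<and> U - T = T')" by auto
      thus ?thesis using False by (auto simp: smono_def)
    qed
    finally show ?thesis using True by (simp add: gmul_def)
  qed
qed

lemma smono_diff: "(\<lambda>S. smono a T S - smono b T S) = smono (a - b) T"
  by (rule ext) (simp add: smono_def)

lemma gmul_smono_self:
  assumes "finite T"
  shows "gmul a (smono d T) T = a {} * d"
proof -
  have "(\<Sum>S\<in>Pow T. gsgn S (T - S) * a S * smono d T (T - S)) =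
        (\<Sum>S\<in>Pow T. if S = {} then a {} * d else 0)"
    by (rule sum.cong) (auto simp: smono_def)
  thus ?thesis using assms by (simp add: gmul_def)
qed

definition phi0 :: "nat \<Rightarrow> 'k::field ut" where
  "phi0 i = (if i = 1 then gone else gzero, if i = 2 then gone else gzero, smono 1 {i})"

lemma fin3_phi0: "fin3 (phi0 i)"
  by (simp add: fin3_def phi0_def fin0_gone fin0_gzero fin0_smono)

lemma phi0_A: "(phi0 i :: 'k::field ut) \<in> Acarrier"
proof -
  have g: "(gone :: 'k gr) \<in> grass" "(gzero :: 'k gr) \<in> grass" "(smono 1 {i} :: 'k gr) \<in> grass"
  proof -
    have "{S. gone S \<noteq> (0::'k)} \<subseteq> {{}}" by (auto simp: gone_def)
    thus "gone \<in> (grass :: 'k gr set)" by (auto simp: grass_def gone_def intro: finite_subset)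
    show "gzero \<in> (grass :: 'k gr set)" by (simp add: grass_def gzero_def)
    have "{S. smono 1 {i} S \<noteq> (0::'k)} \<subseteq> {{i}}" by (auto simp: smono_def)
    thus "smono 1 {i} \<in> (grass :: 'k gr set)" by (auto simp: grass_def smono_def intro: finite_subset)
  qed
  have "(gone :: 'k gr) \<in> grass0" "(gzero :: 'k gr) \<in> grass0" using g by (auto simp: grass0_def gone_def gzero_def)
  thus ?thesis using g by (simp add: Acarrier_def phi0_def)
qed

lemma phi0_1: "phi0 1 = (gone, gzero, smono 1 {1})" by (simp add: phi0_def)
lemma phi0_1': "phi0 (Suc 0) = (gone, gzero, smono 1 {Suc 0})" by (simp add: phi0_def)
lemma phi0_2: "phi0 2 = (gzero, gone, smono 1 {2})" by (simp add: phi0_def)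
lemma c_phi0[simp]: "snd (snd (phi0 i)) = smono 1 {i}" by (simp add: phi0_def)

lemma utsub_proj: "utsub x y = ((\<lambda>S. fst x S - fst y S), (\<lambda>S. fst (snd x) S - fst (snd y) S),
   (\<lambda>S. snd (snd x) S - snd (snd y) S))"
  by (cases x; cases y) auto

lemma commc:
  assumes "1 \<le> i"
  shows "snd (snd (evalA phi0 (pcomm (pvar i) (pvar (Suc i))))) = (smono 2 {i, Suc i} :: 'k::field gr)"
proof -
  have f: "pvar i \<in> freealg" "pvar (Suc i) \<in> freealg"
    using pvar_fn[of i "Suc i"] pvar_fn[of "Suc i" "Suc i"] assms fn_freealg by auto
  have m1: "gmul (smono 1 {i}) (smono 1 {Suc i}) = (smono 1 {i, Suc i} :: 'k gr)"
    by (subst smono_mul) (auto simp: gsgn_ordered insert_commute)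
  have m2: "gmul (smono 1 {Suc i}) (smono 1 {i}) = (smono (-1) {i, Suc i} :: 'k gr)"
    by (subst smono_mul) (auto simp: gsgn_swap insert_commute)
  show ?thesis
    unfolding evalA_pcomm[OF f] evalA_pvar[OF fin3_phi0]
    by (simp add: utsub_proj utmul_proj m1 m2 smono_diff)
qed

lemma lcomm_Suc: "lcomm a (replicate (Suc k) x) = pcomm (lcomm a (replicate k x)) x"
proof -
  have "replicate (Suc k) x = replicate k x @ [x]" by (simp add: replicate_append_same)
  thus ?thesis by (simp add: lcomm_def)
qed

lemma Ylem:
  assumes "2 \<le> n"
  shows "(lcomm (pvar 2) (replicate k (pvar 1)) :: 'k::field npoly) \<in> freealg_n n \<and>
    fst (evalA phi0 (lcomm (pvar 2) (replicate k (pvar 1)))) = (gzero :: 'k gr) \<and>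
    fst (snd (evalA phi0 (lcomm (pvar 2) (replicate k (pvar 1))))) {} = ((-1)^k :: 'k)"
proof (induction k)
  case 0
  have "pvar 2 \<in> freealg_n n" using assms by (intro pvar_fn) auto
  moreover have "evalA phi0 (pvar 2) = (phi0 2 :: 'k ut)" by (rule evalA_pvar[OF fin3_phi0])
  ultimately show ?case by (simp add: lcomm_def phi0_2 gone_def)
next
  case (Suc k)
  let ?Y = "lcomm (pvar 2) (replicate k (pvar 1)) :: 'k npoly"
  have p1: "(pvar 1 :: 'k npoly) \<in> freealg_n n" using assms by (intro pvar_fn) auto
  have Yf: "?Y \<in> freealg_n n" using Suc.IH by blast
  obtain a b c where E: "evalA phi0 ?Y = (a, b, c)" by (cases "evalA phi0 ?Y")
  have a: "a = gzero" and b: "b {} = (-1)^k" using Suc.IH E by auto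
  have ev: "evalA phi0 (lcomm (pvar 2) (replicate (Suc k) (pvar 1))) =
      utsub (utmul (a,b,c) (phi0 1)) (utmul (phi0 1) (a,b,c))"
    unfolding lcomm_Suc evalA_pcomm[OF fn_freealg[OF Yf] fn_freealg[OF p1]] E evalA_pvar[OF fin3_phi0] ..
  have gz: "gzero {} = (0::'k)" by (simp add: gzero_def)
  have g1: "gmul b (smono 1 {Suc 0}) {} = 0" by (simp add: gmul_def smono_def)
  have g2: "gmul gone b {} = b {}" by (simp add: gmul_def gone_def)
  show ?case
  proof (intro conjI)
    show "(lcomm (pvar 2) (replicate (Suc k) (pvar 1)) :: 'k npoly) \<in> freealg_n n"
      unfolding lcomm_Suc by (rule pcomm_fn[OF Yf p1])
    show "fst (evalA phi0 (lcomm (pvar 2) (replicate (Suc k) (pvar 1)))) = (gzero :: 'k gr)"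
      unfolding ev by (simp add: utsub_proj utmul_proj a) (simp add: gzero_def)
    show "fst (snd (evalA phi0 (lcomm (pvar 2) (replicate (Suc k) (pvar 1))))) {} = ((-1)^Suc k :: 'k)"
      unfolding ev by (simp add: utsub_proj utmul_proj a phi0_1 phi0_1' gadd_def g1 g2 b gz)
  qed
qed

definition gpoly :: "nat \<Rightarrow> 'k::field npoly" where
  "gpoly j = pcomm (pvar (2 * j + 3)) (pvar (2 * j + 4))"

lemma pprod_Nil[simp]: "pprod [] = pone" by (simp add: pprod_def)
lemma pprod_Cons[simp]: "pprod (x # xs) = pmul x (pprod xs)" by (simp add: pprod_def)

lemma Rlem:
  assumes "2 * (a + d) + 2 \<le> n"
  shows "(pprod (map gpoly [a..<a + d]) :: 'k::field npoly) \<in> freealg_n n \<and>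
    snd (snd (evalA phi0 (pprod (map gpoly [a..<a + d]) :: 'k npoly))) = smono (2 ^ d) {2 * a + 3..2 * a + 2 * d + 2}"
  using assms
proof (induction d arbitrary: a)
  case 0
  have e: "{2 * a + 3..2 * a + 2 * 0 + 2} = {}" by simp
  show ?case unfolding e by (simp add: pone_fn evalA_pone utone_def gone_def smono_def)
next
  case (Suc d)
  have up: "[a..<a + Suc d] = a # [Suc a..<Suc a + d]" by (simp add: upt_conv_Cons)
  have IH: "(pprod (map gpoly [Suc a..<Suc a + d]) :: 'k npoly) \<in> freealg_n n \<and>
    snd (snd (evalA phi0 (pprod (map gpoly [Suc a..<Suc a + d]) :: 'k npoly))) =
      smono (2 ^ d) {2 * Suc a + 3..2 * Suc a + 2 * d + 2}"
    using Suc.IH[of "Suc a"] Suc.prems by simp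
  have gf: "(gpoly a :: 'k npoly) \<in> freealg_n n"
    unfolding gpoly_def using Suc.prems by (intro pcomm_fn pvar_fn) auto
  have gc: "snd (snd (evalA phi0 (gpoly a :: 'k npoly))) = smono 2 {2 * a + 3, Suc (2 * a + 3)}"
  proof -
    have s4: "Suc (2 * a + 3) = 2 * a + 4" by simp
    have "(gpoly a :: 'k npoly) = pcomm (pvar (2 * a + 3)) (pvar (Suc (2 * a + 3)))"
      unfolding gpoly_def s4 ..
    thus ?thesis using commc[of "2 * a + 3"] by simp
  qed
  have pm: "evalA phi0 (pmul (gpoly a) (pprod (map gpoly [Suc a..<Suc a + d])) :: 'k npoly) =
     utmul (evalA phi0 (gpoly a)) (evalA phi0 (pprod (map gpoly [Suc a..<Suc a + d])))"
    using gf IH by (intro evalA_pmul fn_freealg) auto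
  have sm: "gmul (smono 2 {2 * a + 3, Suc (2 * a + 3)}) (smono (2 ^ d) {2 * Suc a + 3..2 * Suc a + 2 * d + 2})
       = (smono (2 ^ Suc d) {2 * a + 3..2 * a + 2 * Suc d + 2} :: 'k gr)"
  proof -
    have o: "gsgn {2 * a + 3, Suc (2 * a + 3)} {2 * Suc a + 3..2 * Suc a + 2 * d + 2} = (1::'k)"
      by (rule gsgn_ordered) auto
    have u: "{2 * a + 3, Suc (2 * a + 3)} \<union> {2 * Suc a + 3..2 * Suc a + 2 * d + 2} = {2 * a + 3..2 * a + 2 * Suc d + 2}"
      by auto
    have f1: "finite {2 * a + 3, Suc (2 * a + 3)}" by simp
    have f2: "finite {2 * Suc a + 3..2 * Suc a + 2 * d + 2}" by simp
    have dj: "{2 * a + 3, Suc (2 * a + 3)} \<inter> {2 * Suc a + 3..2 * Suc a + 2 * d + 2} = {}" by auto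
    show ?thesis unfolding smono_mul[OF f1 f2 dj] o u by simp
  qed
  have eq: "(pprod (map gpoly [a..<a + Suc d]) :: 'k npoly) = pmul (gpoly a) (pprod (map gpoly [Suc a..<Suc a + d]))"
    unfolding up list.map pprod_Cons ..
  show ?case
  proof
    show "(pprod (map gpoly [a..<a + Suc d]) :: 'k npoly) \<in> freealg_n n"
      unfolding eq using IH gf by (intro pmul_fn) auto
    show "snd (snd (evalA phi0 (pprod (map gpoly [a..<a + Suc d]) :: 'k npoly))) =
      smono (2 ^ Suc d) {2 * a + 3..2 * a + 2 * Suc d + 2}"
      unfolding eq pm utmul_proj snd_conv gc IH[THEN conjunct2] sm ..
  qed
qed

lemma Flem:
  assumes "2 \<le> n" "even n"
  shows "snd (snd (evalA phi0 (pmul (pcomm (pvar 1) (pvar 2))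
        (pprod (map gpoly [0..<(n - 2) div 2])) :: 'k::field npoly))) = smono (2 ^ (n div 2)) {1..n}
   \<and> (pmul (pcomm (pvar 1) (pvar 2)) (pprod (map gpoly [0..<(n - 2) div 2])) :: 'k npoly) \<in> freealg_n n"
proof -
  define r where "r = (n - 2) div 2"
  have nr: "n = 2 * r + 2" using assms unfolding r_def by (auto elim!: evenE)
  have R: "(pprod (map gpoly [0..<0 + r]) :: 'k npoly) \<in> freealg_n n \<and>
    snd (snd (evalA phi0 (pprod (map gpoly [0..<0 + r]) :: 'k npoly))) = smono (2 ^ r) {2 * 0 + 3..2 * 0 + 2 * r + 2}"
    by (rule Rlem) (simp add: nr)
  have R1: "(pprod (map gpoly [0..<r]) :: 'k npoly) \<in> freealg_n n" using R by simp
  have R2: "snd (snd (evalA phi0 (pprod (map gpoly [0..<r]) :: 'k npoly))) = smono (2 ^ r) {3..2 * r + 2}"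
    using R by simp
  have c2: "pcomm (pvar 1) (pvar 2) = pcomm (pvar 1) (pvar (Suc 1))" by (simp add: numeral_2_eq_2)
  have Cf: "(pcomm (pvar 1) (pvar 2) :: 'k npoly) \<in> freealg_n n"
    using assms by (intro pcomm_fn pvar_fn) auto
  have C2: "snd (snd (evalA phi0 (pcomm (pvar 1) (pvar 2) :: 'k npoly))) = smono 2 {1, Suc 1}"
    unfolding c2 by (rule commc) simp
  have pm: "evalA phi0 (pmul (pcomm (pvar 1) (pvar 2)) (pprod (map gpoly [0..<r])) :: 'k npoly) =
     utmul (evalA phi0 (pcomm (pvar 1) (pvar 2))) (evalA phi0 (pprod (map gpoly [0..<r])))"
    using Cf R1 by (intro evalA_pmul fn_freealg) auto
  have sm: "gmul (smono 2 {1, Suc 1}) (smono (2 ^ r) {3..2 * r + 2}) = (smono (2 ^ (n div 2)) {1..n} :: 'k gr)"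
  proof -
    have o: "gsgn {1, Suc 1} {3..2 * r + 2} = (1::'k)" by (rule gsgn_ordered) auto
    have u: "{1, Suc 1} \<union> {3..2 * r + 2} = {1..n}" using nr by auto
    have f1: "finite {1::nat, Suc 1}" by simp
    have f2: "finite {3..2 * r + 2}" by simp
    have dj: "{1, Suc 1} \<inter> {3..2 * r + 2} = {}" by auto
    have nd: "n div 2 = Suc r" using nr by simp
    show ?thesis unfolding smono_mul[OF f1 f2 dj] o u nd by simp
  qed
  show ?thesis unfolding r_def[symmetric]
    using pmul_fn[OF Cf R1] by (simp only: pm utmul_proj snd_conv C2 R2 sm)
qed

definition delta :: "nat list \<Rightarrow> 'k::field npoly" where
  "delta u = (\<lambda>w. if w = u then 1 else 0)"

lemma take_drop_iff:
  assumes "i \<le> length w"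
  shows "(take i w = u \<and> drop i w = v) \<longleftrightarrow> (i = length u \<and> w = u @ v)"
proof
  assume h: "take i w = u \<and> drop i w = v"
  hence "length u = i" using assms by auto
  moreover have "w = u @ v" using h by (metis append_take_drop_id)
  ultimately show "i = length u \<and> w = u @ v" by simp
next
  assume "i = length u \<and> w = u @ v"
  thus "take i w = u \<and> drop i w = v" by simp
qed

lemma pmul_delta: "pmul (delta u) (delta v) = (delta (u @ v) :: 'k::field npoly)"
proof (rule ext)
  fix w
  have "pmul (delta u) (delta v) w = (\<Sum>i\<in>{..length w}. if i = length u then (if w = u @ v then 1 else 0) else (0::'k))"
    unfolding pmul_def
  proof (rule sum.cong[OF refl])
    fix i assume "i \<in> {..length w}"
    hence "i \<le> length w" by simp
    note tdi = take_drop_iff[OF this, of u v]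
    have "delta u (take i w) * delta v (drop i w) = (if take i w = u \<and> drop i w = v then 1 else (0::'k))"
      by (simp add: delta_def)
    also have "\<dots> = (if i = length u \<and> w = u @ v then 1 else 0)" by (simp only: tdi)
    also have "\<dots> = (if i = length u then (if w = u @ v then 1 else 0) else (0::'k))" by simp
    finally show "delta u (take i w) * delta v (drop i w) = (if i = length u then (if w = u @ v then 1 else 0) else (0::'k))" .
  qed
  also have "\<dots> = delta (u @ v) w" by (auto simp: delta_def)
  finally show "pmul (delta u) (delta v) w = (delta (u @ v) w :: 'k)" .
qed

lemma pprod_pvar: "pprod (map pvar u) = (delta u :: 'k::field npoly)"
proof (induction u)
  case Nil thus ?case by (simp add: pone_def delta_def)
next
  case (Cons x u)
  have "pvar x = (delta [x] :: 'k npoly)" by (simp add: pvar_def delta_def)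
  thus ?case using Cons by (simp add: pmul_delta)
qed

lemma psubst_id:
  assumes "f \<in> freealg_n n" "\<And>i. 1 \<le> i \<Longrightarrow> i \<le> n \<Longrightarrow> \<sigma> i = pvar i"
  shows "psubst \<sigma> f = f"
proof (rule ext)
  fix w
  have fin: "finite {u. f u \<noteq> 0}" using assms(1) by (simp add: freealg_n_def freealg_def)
  have "psubst \<sigma> f w = (\<Sum>u\<in>{u. f u \<noteq> 0}. if u = w then f u else 0)"
    unfolding psubst_def
  proof (rule sum.cong[OF refl])
    fix u assume "u \<in> {u. f u \<noteq> 0}"
    hence "set u \<subseteq> {1..n}" using assms(1) by (auto simp: freealg_n_def)
    hence me: "map \<sigma> u = map pvar u" using assms(2) by (intro map_cong) auto
    show "f u * pprod (map \<sigma> u) w = (if u = w then f u else 0)"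
      unfolding me pprod_pvar delta_def by simp
  qed
  also have "\<dots> = f w" using fin by (simp add: sum.delta')
  finally show "psubst \<sigma> f w = f w" .
qed

theorem lemma3p6:
  fixes m n :: nat
  assumes "even n" and "n \<ge> 2" and "m \<ge> n + 2"
  shows "\<not> PI_of_Fn n (f2 m n :: 'k::field_char_0 npoly)"
proof -
  define k where "k = m - n - 1"
  let ?F = "lcomm (pvar 2) (replicate k (pvar 1)) :: 'k npoly"
  let ?G = "pmul (pcomm (pvar 1) (pvar 2)) (pprod (map gpoly [0..<(n - 2) div 2])) :: 'k npoly"
  have gp: "(\<lambda>j. pcomm (pvar (2 * j + 3)) (pvar (2 * j + 4))) = (gpoly :: nat \<Rightarrow> 'k npoly)"
    by (rule ext) (simp add: gpoly_def)
  have f2e: "(f2 m n :: 'k npoly) = pmul ?F ?G" unfolding f2_def gp k_def ..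
  have Y: "?F \<in> freealg_n n \<and> fst (evalA phi0 ?F) = (gzero :: 'k gr) \<and>
           fst (snd (evalA phi0 ?F)) {} = ((-1)^k :: 'k)"
    by (rule Ylem) (use assms in simp)
  have Fl: "snd (snd (evalA phi0 ?G)) = smono (2 ^ (n div 2)) {1..n} \<and> ?G \<in> freealg_n n"
    by (rule Flem) (use assms in auto)
  have ffn: "(f2 m n :: 'k npoly) \<in> freealg_n n"
    unfolding f2e by (rule pmul_fn[OF Y[THEN conjunct1] Fl[THEN conjunct2]])
  have ev: "evalA phi0 (f2 m n :: 'k npoly) = utmul (evalA phi0 ?F) (evalA phi0 ?G)"
    unfolding f2e by (rule evalA_pmul[OF fn_freealg[OF Y[THEN conjunct1]] fn_freealg[OF Fl[THEN conjunct2]]])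
  have bval: "fst (snd (evalA phi0 (f2 m n :: 'k npoly))) {1..n} = (-1)^k * 2 ^ (n div 2)"
  proof -
    have "fst (snd (evalA phi0 (f2 m n :: 'k npoly))) =
        gadd gzero (gmul (fst (snd (evalA phi0 ?F))) (smono (2 ^ (n div 2)) {1..n}))"
      unfolding ev utmul_proj using Y Fl by simp
    hence "fst (snd (evalA phi0 (f2 m n :: 'k npoly))) {1..n} =
        gmul (fst (snd (evalA phi0 ?F))) (smono (2 ^ (n div 2)) {1..n}) {1..n}" by simp
    also have "\<dots> = (-1)^k * 2 ^ (n div 2)" using Y by (simp add: gmul_smono_self)
    finally show ?thesis .
  qed
  have nz: "evalA phi0 (f2 m n :: 'k npoly) \<noteq> utzero"
  proof
    assume "evalA phi0 (f2 m n :: 'k npoly) = utzero"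
    hence "fst (snd (evalA phi0 (f2 m n :: 'k npoly))) {1..n} = 0" by (simp add: utzero_def gzero_def)
    thus False using bval by simp
  qed
  define \<sigma> :: "nat \<Rightarrow> 'k npoly" where "\<sigma> = (\<lambda>i. if 1 \<le> i \<and> i \<le> n then pvar i else pone)"
  have s1: "\<forall>i. \<sigma> i \<in> freealg_n n" unfolding \<sigma>_def by (auto intro: pvar_fn pone_fn)
  have s2: "psubst \<sigma> (f2 m n) = f2 m n" by (rule psubst_id[OF ffn]) (simp add: \<sigma>_def)
  have "psubst \<sigma> (f2 m n) \<notin> TA"
    unfolding s2 TA_def using nz phi0_A by blast
  thus ?thesis unfolding PI_of_Fn_def using s1 by blast
qed

end
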